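(* Let $X$ be a connected, locally path connected space, let $K$ be an open subgroup of $\pi_1^{qtop}(X,x_0)$ and let $H\le K$ with $[K:H]<\infty$. Then $H$ is an open subgroup of $\pi_1^{qtop}(X,x_0)$ if and only if $X$ is homotopically Hausdorff relative to $H$.
   Context: $\pi_1^{qtop}(X,x_0)$ is $\pi_1(X,x_0)$ with the quotient topology induced from the compact-open topology on the space of loops at $x_0$. For $H\le\pi_1(X,x_0)$, $X$ is homotopically Hausdorff relative to $H$ if for every $g\in\pi_1(X,x_0)\setminus H$ and every path $\alpha$ starting at $x_0$ there is an open neighborhood $U$ of $\alpha(1)$ such that there is no loop $\gamma:(I,\partial I)\to(U,\alpha(1))$ with $[\alpha*\gamma*\alpha^{-1}]\in Hg$. *)

theory Defs
  imports "HOL-Analysis.Analysis" "HOL-Algebra.Coset"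
begin

section \<open>Path operations (sort-free copies of joinpaths / reversepath)\<close>

definition path_join :: "(real \<Rightarrow> 'a) \<Rightarrow> (real \<Rightarrow> 'a) \<Rightarrow> real \<Rightarrow> 'a" where
  "path_join g1 g2 = (\<lambda>x. if x \<le> 1/2 then g1 (2 * x) else g2 (2 * x - 1))"

definition path_reverse :: "(real \<Rightarrow> 'a) \<Rightarrow> real \<Rightarrow> 'a" where
  "path_reverse g = (\<lambda>x. g (1 - x))"

definition loops :: "'a topology \<Rightarrow> 'a \<Rightarrow> (real \<Rightarrow> 'a) set" where
  "loops X x0 = {g. pathin X g \<and> g 0 = x0 \<and> g 1 = x0}"

definition loop_homotopic :: "'a topology \<Rightarrow> 'a \<Rightarrow> (real \<Rightarrow> 'a) \<Rightarrow> (real \<Rightarrow> 'a) \<Rightarrow> bool" where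
  "loop_homotopic X x0 p q \<longleftrightarrow> p \<in> loops X x0 \<and> q \<in> loops X x0 \<and>
     homotopic_with (\<lambda>h. h 0 = x0 \<and> h 1 = x0) (top_of_set {0..1}) X p q"

definition loop_class :: "'a topology \<Rightarrow> 'a \<Rightarrow> (real \<Rightarrow> 'a) \<Rightarrow> (real \<Rightarrow> 'a) set" where
  "loop_class X x0 p = {q. loop_homotopic X x0 p q}"

definition fundamental_group :: "'a topology \<Rightarrow> 'a \<Rightarrow> ((real \<Rightarrow> 'a) set) monoid" where
  "fundamental_group X x0 =
     \<lparr>carrier = loop_class X x0 ` loops X x0,
      mult = (\<lambda>A B. loop_class X x0 (path_join (SOME p. p \<in> A) (SOME q. q \<in> B))),
      one = loop_class X x0 (\<lambda>t. x0)\<rparr>"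

definition compact_open_subbasis :: "'a topology \<Rightarrow> 'a \<Rightarrow> (real \<Rightarrow> 'a) set set" where
  "compact_open_subbasis X x0 =
     {{g \<in> loops X x0. g ` C \<subseteq> U} | C U. compactin (top_of_set {0..1}) C \<and> openin X U}"

definition loop_space_top :: "'a topology \<Rightarrow> 'a \<Rightarrow> (real \<Rightarrow> 'a) topology" where
  "loop_space_top X x0 = topology_generated_by (compact_open_subbasis X x0)"

definition pi1_qtop :: "'a topology \<Rightarrow> 'a \<Rightarrow> ((real \<Rightarrow> 'a) set) topology" where
  "pi1_qtop X x0 = topology (\<lambda>V. V \<subseteq> carrier (fundamental_group X x0) \<and>
      openin (loop_space_top X x0) {p \<in> loops X x0. loop_class X x0 p \<in> V})"

definition homotopically_hausdorff_rel ::
  "'a topology \<Rightarrow> 'a \<Rightarrow> ((real \<Rightarrow> 'a) set) set \<Rightarrow> bool" where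
  "homotopically_hausdorff_rel X x0 H \<longleftrightarrow>
     (\<forall>g \<in> carrier (fundamental_group X x0) - H. \<forall>\<alpha>. pathin X \<alpha> \<and> \<alpha> 0 = x0 \<longrightarrow>
        (\<exists>U. openin X U \<and> \<alpha> 1 \<in> U \<and>
           \<not> (\<exists>\<gamma>. pathin (subtopology X U) \<gamma> \<and> \<gamma> 0 = \<alpha> 1 \<and> \<gamma> 1 = \<alpha> 1 \<and>
                 loop_class X x0 (path_join (path_join \<alpha> \<gamma>) (path_reverse \<alpha>))
                   \<in> H #>\<^bsub>fundamental_group X x0\<^esub> g)))"

end

theory Submission
  imports Defs
begin

lemma prod01: "prod_topology (top_of_set S) (top_of_set T) = top_of_set (S \<times> (T::real set))"
  by (metis prod_topology_euclidean subtopology_Times)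

lemma pathin_comp_cont:
  assumes "pathin X a" "continuous_on S \<phi>" "\<phi> ` S \<subseteq> {0..1}"
  shows "continuous_map (top_of_set S) X (\<lambda>x. a (\<phi> x))"
proof -
  have "continuous_map (top_of_set S) (top_of_set {0..1}) \<phi>"
    using assms by (simp add: image_subset_iff Pi_iff)
  then have "continuous_map (top_of_set S) X (a \<circ> \<phi>)"
    using assms(1) continuous_map_compose pathin_def by blast
  then show ?thesis by (simp add: o_def)
qed

lemma pathin_comp_cont2:
  assumes "pathin X a" "continuous_on S \<phi>" "\<phi> ` S \<subseteq> {0..1}"
  shows "continuous_map (top_of_set S) X (a \<circ> \<phi>)"
  using pathin_comp_cont[OF assms] by (simp add: o_def)

lemma pathin_reparam:
  assumes "pathin X a" "continuous_on {0..1} \<phi>" "\<phi> ` {0..1} \<subseteq> {0..1}"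
  shows "pathin X (\<lambda>x. a (\<phi> x))"
  using pathin_comp_cont[OF assms] by (simp add: pathin_def)

lemma pathin_join:
  assumes a: "pathin X a" and b: "pathin X b" and e: "a 1 = b 0"
  shows "pathin X (path_join a b)"
proof -
  have "continuous_map (top_of_set {0..1}) X (\<lambda>x. if x \<le> 1/2 then a (2*x) else b (2*x-1))"
  proof (rule continuous_map_cases_le)
    show "continuous_map (top_of_set {0..1}) euclideanreal (\<lambda>x. x)" by simp
    show "continuous_map (top_of_set {0..1}) euclideanreal (\<lambda>x. 1/2)" by simp
    have "continuous_map (top_of_set {x\<in>{0..1}. x \<le> 1/2}) X (\<lambda>x. a (2*x))"
      by (rule pathin_comp_cont[OF a]) (auto intro!: continuous_intros)
    moreover have "{0..1} \<inter> {x \<in> topspace (top_of_set {0..1}). x \<le> (1/2::real)} = {x\<in>{0..1}. x \<le> 1/2}" by auto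
    ultimately show "continuous_map (subtopology (top_of_set {0..1}) {x \<in> topspace (top_of_set {0..1}). x \<le> 1/2}) X (\<lambda>x. a (2*x))"
      unfolding subtopology_subtopology by simp
    have "continuous_map (top_of_set {x\<in>{0..1}. 1/2 \<le> x}) X (\<lambda>x. b (2*x-1))"
      by (rule pathin_comp_cont[OF b]) (auto intro!: continuous_intros)
    moreover have "{0..1} \<inter> {x \<in> topspace (top_of_set {0..1}). (1/2::real) \<le> x} = {x\<in>{0..1}. 1/2 \<le> x}" by auto
    ultimately show "continuous_map (subtopology (top_of_set {0..1}) {x \<in> topspace (top_of_set {0..1}). 1/2 \<le> x}) X (\<lambda>x. b (2*x-1))"
      unfolding subtopology_subtopology by simp
    show "a (2*x) = b (2*x-1)" if "x \<in> topspace (top_of_set {0..1})" "x = 1/2" for x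
    proof -
      have "2*x = 1" "2*x-1 = 0" using that by auto
      then show ?thesis using e by simp
    qed
  qed
  then show ?thesis by (simp add: pathin_def path_join_def)
qed

lemma pathin_rev: "pathin X a \<Longrightarrow> pathin X (path_reverse a)"
  unfolding path_reverse_def by (rule pathin_reparam) (auto intro!: continuous_intros)

lemma path_join_0 [simp]: "path_join a b 0 = a 0" and path_join_1 [simp]: "path_join a b 1 = b 1"
  by (auto simp: path_join_def)
lemma path_reverse_0 [simp]: "path_reverse a 0 = a 1" and path_reverse_1 [simp]: "path_reverse a 1 = a 0"
  by (auto simp: path_reverse_def)
lemma path_reverse_reverse [simp]: "path_reverse (path_reverse a) = a"
  by (auto simp: path_reverse_def)

definition ph :: "'a topology \<Rightarrow> (real \<Rightarrow> 'a) \<Rightarrow> (real \<Rightarrow> 'a) \<Rightarrow> bool" where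
  "ph X a b \<longleftrightarrow> pathin X a \<and> pathin X b \<and>
     homotopic_with (\<lambda>h. h 0 = a 0 \<and> h 1 = a 1) (top_of_set {0..1}) X a b"

lemma ph_ends: "ph X a b \<Longrightarrow> b 0 = a 0 \<and> b 1 = a 1"
  unfolding ph_def using homotopic_with_imp_property by blast

lemma ph_paths: "ph X a b \<Longrightarrow> pathin X a \<and> pathin X b"
  unfolding ph_def by blast

lemma ph_refl: "pathin X a \<Longrightarrow> ph X a a"
  by (simp add: ph_def pathin_def)

lemma ph_sym: assumes "ph X a b" shows "ph X b a"
proof -
  have e: "b 0 = a 0" "b 1 = a 1" using ph_ends[OF assms] by auto
  show ?thesis using assms unfolding ph_def e by (simp add: homotopic_with_sym)
qed

lemma ph_trans: assumes "ph X a b" "ph X b c" shows "ph X a c"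
proof -
  have e: "b 0 = a 0" "b 1 = a 1" using ph_ends[OF assms(1)] by auto
  have "homotopic_with (\<lambda>h. h 0 = a 0 \<and> h 1 = a 1) (top_of_set {0..1}) X a b"
       "homotopic_with (\<lambda>h. h 0 = a 0 \<and> h 1 = a 1) (top_of_set {0..1}) X b c"
    using assms unfolding ph_def e by auto
  then show ?thesis using assms unfolding ph_def using homotopic_with_trans by blast
qed

lemma ph_eq_right:
  assumes "ph X a b" "\<And>x. x \<in> {0..1} \<Longrightarrow> b' x = b x"
  shows "ph X a b'"
proof -
  obtain h where h: "continuous_map (top_of_set ({0..1::real} \<times> {0..1::real})) X h"
    "\<And>x. h(0,x) = a x" "\<And>x. h(1,x) = b x" "\<And>t. t \<in> {0..1} \<Longrightarrow> h(t,0) = a 0 \<and> h(t,1) = a 1"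
    using assms(1) unfolding ph_def homotopic_with_def prod01 by (auto simp: Ball_def)
  define h' where "h' = (\<lambda>(s,x). if s = 1 then b' x else h(s,x))"
  have "continuous_map (top_of_set ({0..1::real} \<times> {0..1::real})) X h'"
    by (rule continuous_map_eq[OF h(1)]) (auto simp: h'_def h(3) assms(2))
  moreover have "pathin X b'"
    using ph_paths[OF assms(1)] assms(2) unfolding pathin_def
    by (metis (no_types, lifting) continuous_map_eq topspace_euclidean_subtopology)
  ultimately show ?thesis using h ph_ends[OF assms(1)] ph_paths[OF assms(1)] assms(2)[of 0] assms(2)[of 1]
    unfolding ph_def homotopic_with_def prod01
    apply (intro conjI)
      apply simp
     apply simp
    apply (rule exI[where x=h'])
    apply (auto simp: h'_def)
    done
qed

lemma ph_eq_left:
  assumes "ph X a b" "\<And>x. x \<in> {0..1} \<Longrightarrow> a' x = a x"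
  shows "ph X a' b"
  using ph_eq_right[OF ph_sym[OF assms(1)] assms(2)] ph_sym by blast

lemma ph_reparam:
  assumes p: "pathin X p" and cf: "continuous_on {0..1} \<phi>" "\<phi> ` {0..1} \<subseteq> {0..1}"
    and cg: "continuous_on {0..1} \<psi>" "\<psi> ` {0..1} \<subseteq> {0..1}"
    and e: "\<phi> 0 = \<psi> 0" "\<phi> 1 = \<psi> 1"
  shows "ph X (\<lambda>x. p (\<phi> x)) (\<lambda>x. p (\<psi> x))"
proof -
  define h where "h = (\<lambda>z. p ((1 - fst z) * \<phi> (snd z) + fst z * \<psi> (snd z)))"
  have sub: "(1 - s) * \<phi> x + s * \<psi> x \<in> {0..1}" if "s \<in> {0..1}" "x \<in> {0..1}" for s x
  proof -
    have "\<phi> x \<in> {0..1}" "\<psi> x \<in> {0..1}" using that cf(2) cg(2) by blast+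
    then show ?thesis using that
      using convex_bound_le[of "\<phi> x" 1 "\<psi> x" "1-s" s] by (auto intro!: add_nonneg_nonneg mult_nonneg_nonneg)
  qed
  have "continuous_map (top_of_set ({0..1::real} \<times> {0..1::real})) X h"
    unfolding h_def
    by (rule pathin_comp_cont[OF p])
       (auto intro!: continuous_intros continuous_on_compose2[OF cf(1)] continuous_on_compose2[OF cg(1)] sub)
  then show ?thesis
    unfolding ph_def homotopic_with_def prod01
    using e by (intro conjI exI[where x=h] pathin_reparam[OF p] cf cg) (auto simp: h_def algebra_simps)
qed

lemma cont_comp_gen:
  assumes "continuous_map (top_of_set S) X a" "continuous_on T \<phi>" "\<phi> ` T \<subseteq> S"
  shows "continuous_map (top_of_set T) X (\<lambda>x. a (\<phi> x))"
proof -
  have "continuous_map (top_of_set T) (top_of_set S) \<phi>"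
    using assms by (simp add: image_subset_iff Pi_iff)
  then have "continuous_map (top_of_set T) X (a \<circ> \<phi>)"
    using assms(1) continuous_map_compose by blast
  then show ?thesis by (simp add: o_def)
qed

lemma ph_homI:
  assumes "pathin X a" "pathin X b" "continuous_map (top_of_set ({0..1::real} \<times> {0..1::real})) X h"
    "\<And>x. h(0,x) = a x" "\<And>x. h(1,x) = b x" "\<And>t. t \<in> {0..1} \<Longrightarrow> h(t,0) = a 0 \<and> h(t,1) = a 1"
  shows "ph X a b"
  unfolding ph_def homotopic_with_def prod01 using assms
  by (intro conjI exI[where x=h]) auto

lemma ph_homE:
  assumes "ph X a b"
  obtains h where "continuous_map (top_of_set ({0..1::real} \<times> {0..1::real})) X h"
    "\<And>x. h(0,x) = a x" "\<And>x. h(1,x) = b x" "\<And>t. t \<in> {0..1} \<Longrightarrow> h(t,0) = a 0 \<and> h(t,1) = a 1"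
  using assms unfolding ph_def homotopic_with_def prod01 by (auto simp: Ball_def)

lemma ph_join:
  assumes A: "ph X a a'" and B: "ph X b b'" and e: "a 1 = b 0"
  shows "ph X (path_join a b) (path_join a' b')"
proof -
  obtain h1 where h1: "continuous_map (top_of_set ({0..1::real} \<times> {0..1::real})) X h1"
    "\<And>x. h1(0,x) = a x" "\<And>x. h1(1,x) = a' x" "\<And>t. t \<in> {0..1} \<Longrightarrow> h1(t,0) = a 0 \<and> h1(t,1) = a 1"
    using ph_homE[OF A] by blast
  obtain h2 where h2: "continuous_map (top_of_set ({0..1::real} \<times> {0..1::real})) X h2"
    "\<And>x. h2(0,x) = b x" "\<And>x. h2(1,x) = b' x" "\<And>t. t \<in> {0..1} \<Longrightarrow> h2(t,0) = b 0 \<and> h2(t,1) = b 1"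
    using ph_homE[OF B] by blast
  have e': "a' 1 = b' 0" using ph_ends[OF A] ph_ends[OF B] e by auto
  define S where "S = ({0..1::real} \<times> {0..1::real})"
  define k where "k = (\<lambda>z. if snd z \<le> 1/2 then h1 (fst z, 2 * snd z) else h2 (fst z, 2 * snd z - 1))"
  have "continuous_map (top_of_set S) X k"
    unfolding k_def
  proof (rule continuous_map_cases_le)
    show "continuous_map (top_of_set S) euclideanreal snd"
      by (simp add: continuous_on_snd)
    show "continuous_map (top_of_set S) euclideanreal (\<lambda>x. 1/2)" by simp
    have eq1: "S \<inter> {x \<in> topspace (top_of_set S). snd x \<le> (1/2::real)} = {x\<in>S. snd x \<le> 1/2}" by auto
    have "continuous_map (top_of_set {x\<in>S. snd x \<le> 1/2}) X (\<lambda>z. h1 (fst z, 2 * snd z))"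
      apply (rule cont_comp_gen[OF h1(1)[folded S_def], where \<phi>="\<lambda>z. (fst z, 2 * snd z)" and T="{x\<in>S. snd x \<le> 1/2}"])
       apply (intro continuous_intros)
      apply (auto simp: S_def mem_Times_iff)
      done
    then show "continuous_map (subtopology (top_of_set S) {x \<in> topspace (top_of_set S). snd x \<le> 1/2}) X (\<lambda>z. h1 (fst z, 2 * snd z))"
      unfolding subtopology_subtopology eq1 .
    have eq2: "S \<inter> {x \<in> topspace (top_of_set S). (1/2::real) \<le> snd x} = {x\<in>S. 1/2 \<le> snd x}" by auto
    have "continuous_map (top_of_set {x\<in>S. 1/2 \<le> snd x}) X (\<lambda>z. h2 (fst z, 2 * snd z - 1))"
      apply (rule cont_comp_gen[OF h2(1)[folded S_def], where \<phi>="\<lambda>z. (fst z, 2 * snd z - 1)" and T="{x\<in>S. 1/2 \<le> snd x}"])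
       apply (intro continuous_intros)
      apply (auto simp: S_def mem_Times_iff)
      done
    then show "continuous_map (subtopology (top_of_set S) {x \<in> topspace (top_of_set S). 1/2 \<le> snd x}) X (\<lambda>z. h2 (fst z, 2 * snd z - 1))"
      unfolding subtopology_subtopology eq2 .
    show "h1 (fst z, 2 * snd z) = h2 (fst z, 2 * snd z - 1)" if "z \<in> topspace (top_of_set S)" "snd z = 1/2" for z
    proof -
      have "2 * snd z = 1" "2 * snd z - 1 = 0" "fst z \<in> {0..1}" using that by (auto simp: S_def)
      then show ?thesis using h1(4) h2(4) e by simp
    qed
  qed
  then show ?thesis
    apply (intro ph_homI[where h=k] pathin_join ph_paths[OF A, THEN conjunct1] ph_paths[OF A, THEN conjunct2]
       ph_paths[OF B, THEN conjunct1] ph_paths[OF B, THEN conjunct2] e e')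
    using h1 h2 by (auto simp: k_def S_def path_join_def)
qed

lemma ph_reparam_eq:
  assumes p: "pathin X p" and cf: "continuous_on {0..1} \<phi>" "\<phi> ` {0..1} \<subseteq> {0..1}"
    and cg: "continuous_on {0..1} \<psi>" "\<psi> ` {0..1} \<subseteq> {0..1}"
    and e: "\<phi> 0 = \<psi> 0" "\<phi> 1 = \<psi> 1"
    and fa: "\<And>x. x \<in> {0..1} \<Longrightarrow> a x = p (\<phi> x)" and fb: "\<And>x. x \<in> {0..1} \<Longrightarrow> b x = p (\<psi> x)"
  shows "ph X a b"
  by (rule ph_eq_left[OF ph_eq_right[OF ph_reparam[OF assms(1-7)]]]) (use fa fb in auto)

lemma convex01: "(s::real) \<in> {0..1} \<Longrightarrow> u \<in> {0..1} \<Longrightarrow> v \<in> {0..1} \<Longrightarrow> (1 - s) * u + s * v \<in> {0..1}"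
  using convex_bound_le[of u 1 v "1-s" s] by (auto intro!: add_nonneg_nonneg mult_nonneg_nonneg)

lemma ph_assoc:
  assumes a: "pathin X a" and b: "pathin X b" and c: "pathin X c" and e: "a 1 = b 0" "b 1 = c 0"
  shows "ph X (path_join (path_join a b) c) (path_join a (path_join b c))"
proof (rule ph_reparam_eq[where p="path_join (path_join a b) c" and \<phi>="\<lambda>x. x"
      and \<psi>="\<lambda>x. max (x/2) (max (x - 1/4) (2*x-1))"])
  show "pathin X (path_join (path_join a b) c)"
    using a b c e by (intro pathin_join) auto
  show "continuous_on {0..1} (\<lambda>x::real. max (x/2) (max (x - 1/4) (2*x-1)))"
    by (intro continuous_intros) auto
  show "(\<lambda>x::real. max (x/2) (max (x - 1/4) (2*x-1))) ` {0..1} \<subseteq> {0..1}"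
    by (auto simp: max_def)
  show "path_join a (path_join b c) x = path_join (path_join a b) c (max (x/2) (max (x - 1/4) (2*x-1)))"
    if "x \<in> {0..1}" for x
  proof -
    consider "x \<le> 1/2" | "1/2 < x" "x \<le> 3/4" | "3/4 < x" by linarith
    then show ?thesis
    proof cases
      case 1
      then have "max (x/2) (max (x - 1/4) (2*x-1)) = x/2" by auto
      then show ?thesis using 1 by (simp add: path_join_def)
    next
      case 2
      then have m: "max (x/2) (max (x - 1/4) (2*x-1)) = x - 1/4" by auto
      have "2 * (2 * (x - 1/4)) - 1 = 2 * (2 * x - 1)" by (simp add: algebra_simps)
      then show ?thesis using 2 unfolding m by (simp add: path_join_def)
    next
      case 3
      then have m: "max (x/2) (max (x - 1/4) (2*x-1)) = 2*x - 1" by auto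
      have "2 * (2 * x - 1) - 1 = 2 * (2 * x - 1) - 1" by simp
      then show ?thesis using 3 unfolding m by (simp add: path_join_def)
    qed
  qed
qed auto

lemma ph_lunit:
  assumes a: "pathin X a"
  shows "ph X (path_join (\<lambda>t. a 0) a) a"
proof (rule ph_reparam_eq[where p="a" and \<phi>="\<lambda>x. max 0 (2*x-1)" and \<psi>="\<lambda>x. x"])
  show "continuous_on {0..1} (\<lambda>x::real. max 0 (2*x-1))" by (intro continuous_intros)
qed (use a in \<open>auto simp: path_join_def\<close>)

lemma ph_runit:
  assumes a: "pathin X a"
  shows "ph X (path_join a (\<lambda>t. a 1)) a"
proof (rule ph_reparam_eq[where p="a" and \<phi>="\<lambda>x. min 1 (2*x)" and \<psi>="\<lambda>x. x"])
  show "continuous_on {0..1} (\<lambda>x::real. min 1 (2*x))" by (intro continuous_intros)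
qed (use a in \<open>auto simp: path_join_def\<close>)

lemma ph_rinv:
  assumes a: "pathin X a"
  shows "ph X (path_join a (path_reverse a)) (\<lambda>t. a 0)"
proof (rule ph_reparam_eq[where p="a" and \<phi>="\<lambda>x. min (2*x) (2-2*x)" and \<psi>="\<lambda>x. 0"])
  show "continuous_on {0..1} (\<lambda>x::real. min (2*x) (2-2*x))" by (intro continuous_intros)
  show "path_join a (path_reverse a) x = a (min (2*x) (2-2*x))" if "x \<in> {0..1}" for x
  proof (cases "x \<le> 1/2")
    case True
    then have "min (2*x) (2-2*x) = 2*x" by auto
    then show ?thesis using True by (simp add: path_join_def)
  next
    case False
    then have "min (2*x) (2-2*x) = 1 - (2*x-1)" by auto
    then show ?thesis using False by (simp add: path_join_def path_reverse_def)
  qed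
qed (use a in \<open>auto\<close>)

lemma ph_linv:
  assumes a: "pathin X a"
  shows "ph X (path_join (path_reverse a) a) (\<lambda>t. a 1)"
  using ph_rinv[OF pathin_rev[OF a]] by simp

lemma convex01b: "(s::real) \<in> {0..1} \<Longrightarrow> u \<in> {0..1} \<Longrightarrow> v \<in> {0..1} \<Longrightarrow> u + (v - u) * s \<in> {0..1}"
  using convex01[of s u v] by (simp add: algebra_simps)

definition psub :: "(real \<Rightarrow> 'a) \<Rightarrow> real \<Rightarrow> real \<Rightarrow> real \<Rightarrow> 'a" where
  "psub p u v = (\<lambda>x. p (u + (v - u) * x))"

lemma psub_0 [simp]: "psub p u v 0 = p u" and psub_1 [simp]: "psub p u v 1 = p v"
  by (auto simp: psub_def)

lemma psub_eq: "u + (v - u) * x = (1 - x) * u + x * v" for u v x :: real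
  by (simp add: algebra_simps)

lemma pathin_psub:
  assumes "pathin X p" "u \<in> {0..1}" "v \<in> {0..1}"
  shows "pathin X (psub p u v)"
  unfolding psub_def
  apply (rule pathin_reparam[OF assms(1)])
   apply (intro continuous_intros)
  unfolding image_subset_iff using assms convex01b by blast

lemma psub_rev: "path_reverse (psub p u v) = psub p v u"
  by (auto simp: psub_def path_reverse_def algebra_simps)

lemma psub_const: "psub p u u = (\<lambda>x. p u)"
  by (auto simp: psub_def)

lemma psub_01: "psub p 0 1 = p"
  by (auto simp: psub_def)

lemma ph_psub:
  assumes p: "pathin X p" and uvw: "u \<in> {0..1}" "v \<in> {0..1}" "w \<in> {0..1}"
  shows "ph X (path_join (psub p u v) (psub p v w)) (psub p u w)"
proof (rule ph_reparam_eq[where p="p" and \<phi>="\<lambda>x. u + (v-u) * min (2*x) 1 + (w-v) * max 0 (2*x-1)"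
      and \<psi>="\<lambda>x. u + (w-u) * x"])
  show "continuous_on {0..1} (\<lambda>x. u + (v-u) * min (2*x) 1 + (w-v) * max 0 (2*x-1))"
    by (intro continuous_intros)
  show "continuous_on {0..1} (\<lambda>x. u + (w-u) * x)"
    by (intro continuous_intros)
  show "(\<lambda>x. u + (w-u) * x) ` {0..1} \<subseteq> {0..1}"
    unfolding image_subset_iff using uvw convex01b by blast
  have H: "u + (v-u) * min (2*x) 1 + (w-v) * max 0 (2*x-1) \<in> {0..1} \<and>
        path_join (psub p u v) (psub p v w) x = p (u + (v-u) * min (2*x) 1 + (w-v) * max 0 (2*x-1))"
    if x: "x \<in> {0..1}" for x
  proof (cases "x \<le> 1/2")
    case True
    then have "min (2*x) 1 = 2*x" "max 0 (2*x-1) = 0" by auto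
    then have "u + (v-u) * min (2*x) 1 + (w-v) * max 0 (2*x-1) = u + (v-u) * (2*x)" by simp
    moreover have "u + (v-u) * (2*x) \<in> {0..1}" using x True uvw convex01b[of "2*x" u v] by simp
    ultimately show ?thesis using True by (simp add: path_join_def psub_def)
  next
    case False
    then have "min (2*x) 1 = 1" "max 0 (2*x-1) = 2*x-1" by auto
    then have "u + (v-u) * min (2*x) 1 + (w-v) * max 0 (2*x-1) = v + (w-v) * (2*x-1)" by (simp add: algebra_simps)
    moreover have "v + (w-v) * (2*x-1) \<in> {0..1}" using x False uvw convex01b[of "2*x-1" v w] by simp
    ultimately show ?thesis using False by (simp add: path_join_def psub_def)
  qed
  show "(\<lambda>x. u + (v-u) * min (2*x) 1 + (w-v) * max 0 (2*x-1)) ` {0..1} \<subseteq> {0..1}"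
    unfolding image_subset_iff using H by blast
  show "\<And>x. x \<in> {0..1} \<Longrightarrow> path_join (psub p u v) (psub p v w) x = p (u + (v-u) * min (2*x) 1 + (w-v) * max 0 (2*x-1))"
    using H by blast
  show "pathin X p" by (rule p)
  show "u + (v-u) * min (2*0) 1 + (w-v) * max 0 (2*0-1) = u + (w-u) * (0::real)" by simp
  show "u + (v-u) * min (2*1) 1 + (w-v) * max 0 (2*1-1) = u + (w-u) * (1::real)" by simp
  show "psub p u w x = p (u + (w-u) * x)" for x by (simp add: psub_def)
qed

section \<open>The fundamental group\<close>

lemma loopsD: "p \<in> loops X x0 \<Longrightarrow> pathin X p \<and> p 0 = x0 \<and> p 1 = x0"
  by (simp add: loops_def)

lemma loopsI: "pathin X p \<Longrightarrow> p 0 = x0 \<Longrightarrow> p 1 = x0 \<Longrightarrow> p \<in> loops X x0"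
  by (simp add: loops_def)

lemma lh_iff: "loop_homotopic X x0 p q \<longleftrightarrow> p \<in> loops X x0 \<and> ph X p q"
proof
  assume L: "loop_homotopic X x0 p q"
  then show "p \<in> loops X x0 \<and> ph X p q"
    unfolding loop_homotopic_def ph_def loops_def by auto
next
  assume R: "p \<in> loops X x0 \<and> ph X p q"
  then have "q \<in> loops X x0" using ph_ends[of X p q] ph_paths[of X p q] by (auto simp: loops_def)
  then show "loop_homotopic X x0 p q"
    using R unfolding loop_homotopic_def ph_def loops_def by auto
qed

lemma class_mem: "q \<in> loop_class X x0 p \<longleftrightarrow> p \<in> loops X x0 \<and> ph X p q"
  by (simp add: loop_class_def lh_iff)

lemma class_self: "p \<in> loops X x0 \<Longrightarrow> p \<in> loop_class X x0 p"
  by (simp add: class_mem ph_refl loopsD)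

lemma ph_loop: "p \<in> loops X x0 \<Longrightarrow> ph X p q \<Longrightarrow> q \<in> loops X x0"
  using ph_ends[of X p q] ph_paths[of X p q] by (auto simp: loops_def)

lemma class_eq:
  assumes "p \<in> loops X x0" "q \<in> loops X x0"
  shows "loop_class X x0 p = loop_class X x0 q \<longleftrightarrow> ph X p q"
proof
  assume "loop_class X x0 p = loop_class X x0 q"
  then have "q \<in> loop_class X x0 p" using class_self[OF assms(2)] by simp
  then show "ph X p q" by (simp add: class_mem)
next
  assume pq: "ph X p q"
  have "ph X p r \<longleftrightarrow> ph X q r" for r
    using ph_trans[OF ph_sym[OF pq], of r] ph_trans[OF pq, of r] by blast
  then show "loop_class X x0 p = loop_class X x0 q"
    using assms unfolding set_eq_iff class_mem by blast
qed

lemma loops_join: "a \<in> loops X x0 \<Longrightarrow> b \<in> loops X x0 \<Longrightarrow> path_join a b \<in> loops X x0"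
  by (auto simp: loops_def intro!: pathin_join)

lemma loops_rev: "a \<in> loops X x0 \<Longrightarrow> path_reverse a \<in> loops X x0"
  by (auto simp: loops_def intro!: pathin_rev)

lemma loops_const: "x0 \<in> topspace X \<Longrightarrow> (\<lambda>t. x0) \<in> loops X x0"
  by (auto simp: loops_def)

lemma fg_carrier: "carrier (fundamental_group X x0) = loop_class X x0 ` loops X x0"
  by (simp add: fundamental_group_def)

lemma fg_one: "\<one>\<^bsub>fundamental_group X x0\<^esub> = loop_class X x0 (\<lambda>t. x0)"
  by (simp add: fundamental_group_def)

lemma fg_mult:
  assumes a: "a \<in> loops X x0" and b: "b \<in> loops X x0"
  shows "loop_class X x0 a \<otimes>\<^bsub>fundamental_group X x0\<^esub> loop_class X x0 b = loop_class X x0 (path_join a b)"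
proof -
  define p where "p = (SOME p. p \<in> loop_class X x0 a)"
  define q where "q = (SOME q. q \<in> loop_class X x0 b)"
  have "p \<in> loop_class X x0 a" unfolding p_def using class_self[OF a] by (rule someI[where x=a])
  then have p: "ph X a p" by (simp add: class_mem)
  have "q \<in> loop_class X x0 b" unfolding q_def using class_self[OF b] by (rule someI[where x=b])
  then have q: "ph X b q" by (simp add: class_mem)
  have pl: "p \<in> loops X x0" using ph_loop[OF a p] .
  have ql: "q \<in> loops X x0" using ph_loop[OF b q] .
  have "ph X (path_join p q) (path_join a b)"
    using ph_join[OF ph_sym[OF p] ph_sym[OF q]] pl ql by (simp add: loops_def)
  then have "loop_class X x0 (path_join p q) = loop_class X x0 (path_join a b)"
    using class_eq[OF loops_join[OF pl ql] loops_join[OF a b]] by blast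
  then show ?thesis by (simp add: fundamental_group_def p_def q_def)
qed

lemma fg_group:
  assumes x0: "x0 \<in> topspace X"
  shows "group (fundamental_group X x0)"
proof (rule groupI)
  let ?G = "fundamental_group X x0"
  show "\<one>\<^bsub>?G\<^esub> \<in> carrier ?G" using loops_const[OF x0] by (simp add: fg_carrier fg_one)
  fix x y z assume x: "x \<in> carrier ?G" and y: "y \<in> carrier ?G" and z: "z \<in> carrier ?G"
  obtain a b c where a: "a \<in> loops X x0" "x = loop_class X x0 a" and b: "b \<in> loops X x0" "y = loop_class X x0 b"
    and c: "c \<in> loops X x0" "z = loop_class X x0 c"
    using x y z by (auto simp: fg_carrier)
  show "x \<otimes>\<^bsub>?G\<^esub> y \<in> carrier ?G" using a b by (simp add: fg_mult fg_carrier loops_join)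
  show "x \<otimes>\<^bsub>?G\<^esub> y \<otimes>\<^bsub>?G\<^esub> z = x \<otimes>\<^bsub>?G\<^esub> (y \<otimes>\<^bsub>?G\<^esub> z)"
    using a b c ph_assoc[of X a b c]
    by (simp add: fg_mult loops_join class_eq loopsD)
  show "\<one>\<^bsub>?G\<^esub> \<otimes>\<^bsub>?G\<^esub> x = x"
    using a ph_lunit[of X a] loops_const[OF x0]
    by (simp add: fg_mult fg_one loops_join class_eq loopsD)
  have "loop_class X x0 (path_reverse a) \<otimes>\<^bsub>?G\<^esub> x = \<one>\<^bsub>?G\<^esub>"
    using a ph_linv[of X a] loops_const[OF x0]
    by (simp add: fg_mult fg_one loops_join loops_rev class_eq loopsD)
  then show "\<exists>y \<in> carrier ?G. y \<otimes>\<^bsub>?G\<^esub> x = \<one>\<^bsub>?G\<^esub>"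
    using a(1) loops_rev[OF a(1)] unfolding fg_carrier by blast
qed

section \<open>Groupoid calculations\<close>

lemma ph_join_l: "ph X a a' \<Longrightarrow> pathin X b \<Longrightarrow> a 1 = b 0 \<Longrightarrow> ph X (path_join a b) (path_join a' b)"
  by (rule ph_join) (auto intro: ph_refl)

lemma ph_join_r: "ph X b b' \<Longrightarrow> pathin X a \<Longrightarrow> a 1 = b 0 \<Longrightarrow> ph X (path_join a b) (path_join a b')"
  by (rule ph_join) (auto intro: ph_refl)

lemma ph_cancel_l:
  assumes v: "pathin X v" and q: "pathin X q" and e: "v 1 = q 0"
  shows "ph X (path_join (path_reverse v) (path_join v q)) q"
proof -
  have "ph X (path_join (path_reverse v) (path_join v q)) (path_join (path_join (path_reverse v) v) q)"
    using ph_sym[OF ph_assoc[OF pathin_rev[OF v] v q]] e by simp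
  moreover have "ph X (path_join (path_join (path_reverse v) v) q) (path_join (\<lambda>t. v 1) q)"
    using ph_join_l[OF ph_linv[OF v] q] e by simp
  moreover have "ph X (path_join (\<lambda>t. v 1) q) q"
    using ph_lunit[OF q] e by simp
  ultimately show ?thesis using ph_trans by blast
qed

definition cj :: "(real \<Rightarrow> 'a) \<Rightarrow> (real \<Rightarrow> 'a) \<Rightarrow> (real \<Rightarrow> 'a) \<Rightarrow> real \<Rightarrow> 'a" where
  "cj u \<beta> v = path_join (path_join u \<beta>) (path_reverse v)"

lemma cj_loop:
  assumes "pathin X u" "pathin X \<beta>" "pathin X v" "u 0 = x0" "v 0 = x0" "u 1 = \<beta> 0" "\<beta> 1 = v 1"
  shows "cj u \<beta> v \<in> loops X x0"
  using assms unfolding cj_def loops_def by (auto intro!: pathin_join pathin_rev)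

lemma cj_comp:
  assumes u: "pathin X u" and b: "pathin X \<beta>" and v: "pathin X v" and b': "pathin X \<beta>'" and w: "pathin X w"
    and e: "u 0 = x0" "v 0 = x0" "w 0 = x0" "u 1 = \<beta> 0" "\<beta> 1 = v 1" "\<beta>' 0 = v 1" "\<beta>' 1 = w 1"
  shows "loop_class X x0 (cj u \<beta> v) \<otimes>\<^bsub>fundamental_group X x0\<^esub> loop_class X x0 (cj v \<beta>' w)
         = loop_class X x0 (cj u (path_join \<beta> \<beta>') w)"
proof -
  have ub: "pathin X (path_join u \<beta>)" using u b e by (intro pathin_join) auto
  have vb: "pathin X (path_join v \<beta>')" using v b' e by (intro pathin_join) auto
  have vbw: "pathin X (path_join (path_join v \<beta>') (path_reverse w))" using vb w e by (intro pathin_join[OF vb] pathin_rev) auto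
  have bw: "pathin X (path_join \<beta>' (path_reverse w))" using b' w e by (intro pathin_join pathin_rev) auto
  have bb: "pathin X (path_join \<beta> \<beta>')" using b b' e by (intro pathin_join) auto
  have 1: "ph X (path_join (cj u \<beta> v) (cj v \<beta>' w))
     (path_join (path_join u \<beta>) (path_join (path_reverse v) (path_join (path_join v \<beta>') (path_reverse w))))"
    unfolding cj_def using ph_assoc[OF ub pathin_rev[OF v] vbw] e by simp
  have 2: "ph X (path_join (path_reverse v) (path_join (path_join v \<beta>') (path_reverse w)))
              (path_join (path_join (path_reverse v) (path_join v \<beta>')) (path_reverse w))"
    using ph_sym[OF ph_assoc[OF pathin_rev[OF v] vb pathin_rev[OF w]]] e by simp
  have 3: "ph X (path_join (path_join (path_reverse v) (path_join v \<beta>')) (path_reverse w))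
              (path_join \<beta>' (path_reverse w))"
    using ph_join_l[OF ph_cancel_l[OF v b'] pathin_rev[OF w]] e by simp
  have 4: "ph X (path_join (path_join u \<beta>) (path_join (path_reverse v) (path_join (path_join v \<beta>') (path_reverse w))))
              (path_join (path_join u \<beta>) (path_join \<beta>' (path_reverse w)))"
    using ph_join_r[OF ph_trans[OF 2 3] ub] e by simp
  have 5: "ph X (path_join (path_join u \<beta>) (path_join \<beta>' (path_reverse w)))
              (path_join (path_join (path_join u \<beta>) \<beta>') (path_reverse w))"
    using ph_sym[OF ph_assoc[OF ub b' pathin_rev[OF w]]] e by simp
  have 6: "ph X (path_join (path_join (path_join u \<beta>) \<beta>') (path_reverse w))
              (cj u (path_join \<beta> \<beta>') w)"
    unfolding cj_def using ph_join_l[OF ph_assoc[OF u b b'] pathin_rev[OF w]] e by simp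
  have L: "ph X (path_join (cj u \<beta> v) (cj v \<beta>' w)) (cj u (path_join \<beta> \<beta>') w)"
    using ph_trans[OF 1 ph_trans[OF 4 ph_trans[OF 5 6]]] .
  have l1: "cj u \<beta> v \<in> loops X x0" by (rule cj_loop[OF u b v]) (use e in auto)
  have l2: "cj v \<beta>' w \<in> loops X x0" by (rule cj_loop[OF v b' w]) (use e in auto)
  have l3: "cj u (path_join \<beta> \<beta>') w \<in> loops X x0" by (rule cj_loop[OF u bb w]) (use e in auto)
  show ?thesis
    using fg_mult[OF l1 l2] class_eq[OF loops_join[OF l1 l2] l3] L by simp
qed

lemma cj_triv:
  assumes u: "pathin X u" and b: "pathin X \<beta>" and v: "pathin X v"
    and e: "u 0 = x0" "v 0 = x0" "u 1 = \<beta> 0" "\<beta> 1 = v 1" and h: "ph X (path_join u \<beta>) v"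
  shows "loop_class X x0 (cj u \<beta> v) = \<one>\<^bsub>fundamental_group X x0\<^esub>"
proof -
  have "ph X (cj u \<beta> v) (path_join v (path_reverse v))"
    unfolding cj_def using ph_join_l[OF h pathin_rev[OF v]] e by simp
  moreover have "ph X (path_join v (path_reverse v)) (\<lambda>t. x0)"
    using ph_rinv[OF v] e by simp
  ultimately have "ph X (cj u \<beta> v) (\<lambda>t. x0)" using ph_trans by blast
  moreover have "cj u \<beta> v \<in> loops X x0" by (rule cj_loop[OF u b v]) (use e in auto)
  moreover have "(\<lambda>t. x0) \<in> loops X x0"
    using e path_start_in_topspace[OF u] by (auto simp: loops_def)
  ultimately show ?thesis by (simp add: fg_one class_eq)
qed

lemma cj_const:
  assumes p: "p \<in> loops X x0"
  shows "loop_class X x0 (cj p (\<lambda>t. x0) (\<lambda>t. x0)) = loop_class X x0 p"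
proof -
  have pp: "pathin X p" "p 0 = x0" "p 1 = x0" using loopsD[OF p] by auto
  have r: "path_reverse (\<lambda>t. x0) = (\<lambda>t. x0)" by (simp add: path_reverse_def)
  have "ph X (path_join p (\<lambda>t. x0)) p" using ph_runit[OF pp(1)] pp by simp
  moreover have "ph X (path_join (path_join p (\<lambda>t. x0)) (\<lambda>t. x0)) (path_join p (\<lambda>t. x0))"
    using ph_runit[OF pathin_join[OF pp(1), of "\<lambda>t. x0"]] pp path_start_in_topspace[OF pp(1)] by simp
  ultimately have "ph X (cj p (\<lambda>t. x0) (\<lambda>t. x0)) p" unfolding cj_def r using ph_trans by blast
  moreover have "cj p (\<lambda>t. x0) (\<lambda>t. x0) \<in> loops X x0"
    by (rule cj_loop) (use pp path_start_in_topspace[OF pp(1)] in auto)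
  ultimately show ?thesis using class_eq[of "cj p (\<lambda>t. x0) (\<lambda>t. x0)" X x0 p] p by blast
qed

lemma gen_fin:
  assumes "generate_topology_on S V" "x \<in> V"
  shows "\<exists>F. finite F \<and> F \<subseteq> S \<and> x \<in> \<Inter>F \<and> \<Inter>F \<subseteq> V"
  using assms
proof (induction arbitrary: x rule: generate_topology_on.induct)
  case Empty
  then show ?case by simp
next
  case (Int a b)
  have xa: "x \<in> a" and xb: "x \<in> b" using Int.prems by auto
  obtain F1 where F1: "finite F1" "F1 \<subseteq> S" "x \<in> \<Inter>F1" "\<Inter>F1 \<subseteq> a" using Int.IH(1)[OF xa] by blast
  obtain F2 where F2: "finite F2" "F2 \<subseteq> S" "x \<in> \<Inter>F2" "\<Inter>F2 \<subseteq> b" using Int.IH(2)[OF xb] by blast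
  show ?case using F1 F2 by (intro exI[where x="F1 \<union> F2"]) auto
next
  case (UN K)
  then obtain k where k: "k \<in> K" "x \<in> k" by auto
  obtain F where "finite F" "F \<subseteq> S" "x \<in> \<Inter>F" "\<Inter>F \<subseteq> k" using UN.IH[OF k]
    by fast
  then show ?case using \<open>k \<in> K\<close> by (intro exI[where x=F]) auto
next
  case (Basis s)
  then show ?case by (intro exI[where x="{s}"]) auto
qed

lemma qtop_open:
  "openin (pi1_qtop X x0) V \<longleftrightarrow> V \<subseteq> carrier (fundamental_group X x0) \<and>
      openin (loop_space_top X x0) {p \<in> loops X x0. loop_class X x0 p \<in> V}"
proof -
  let ?P = "\<lambda>V. V \<subseteq> carrier (fundamental_group X x0) \<and>
      openin (loop_space_top X x0) {p \<in> loops X x0. loop_class X x0 p \<in> V}"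
  have 1: "?P (S \<inter> T)" if "?P S" "?P T" for S T
  proof -
    have "{p \<in> loops X x0. loop_class X x0 p \<in> S \<inter> T} =
       {p \<in> loops X x0. loop_class X x0 p \<in> S} \<inter> {p \<in> loops X x0. loop_class X x0 p \<in> T}" by auto
    then show ?thesis using that by auto
  qed
  have 2: "?P (\<Union>K)" if K: "\<forall>S\<in>K. ?P S" for K
  proof -
    have "{p \<in> loops X x0. loop_class X x0 p \<in> \<Union>K} = \<Union>((\<lambda>S. {p \<in> loops X x0. loop_class X x0 p \<in> S}) ` K)" by auto
    moreover have "openin (loop_space_top X x0) (\<Union>((\<lambda>S. {p \<in> loops X x0. loop_class X x0 p \<in> S}) ` K))"
      using K by (intro openin_Union) auto
    ultimately show ?thesis using K by auto
  qed
  have "istopology ?P"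
    unfolding istopology_def using 1 2 by blast
  then show ?thesis unfolding pi1_qtop_def by simp
qed

lemma subbasic_open:
  assumes "compactin (top_of_set {0..1}) C" "openin X U"
  shows "openin (loop_space_top X x0) {g \<in> loops X x0. g ` C \<subseteq> U}"
  unfolding loop_space_top_def openin_topology_generated_by_iff
  by (rule generate_topology_on.Basis) (use assms in \<open>auto simp: compact_open_subbasis_def\<close>)

lemma LP_of_open:
  assumes x0: "x0 \<in> topspace X" and op: "openin (pi1_qtop X x0) H"
    and one: "\<one>\<^bsub>fundamental_group X x0\<^esub> \<in> H"
    and a: "pathin X \<alpha>" "\<alpha> 0 = x0"
  shows "\<exists>U. openin X U \<and> \<alpha> 1 \<in> U \<and> (\<forall>\<gamma>. pathin (subtopology X U) \<gamma> \<and> \<gamma> 0 = \<alpha> 1 \<and> \<gamma> 1 = \<alpha> 1 \<longrightarrow>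
        loop_class X x0 (cj \<alpha> \<gamma> \<alpha>) \<in> H)"
proof -
  define P where "P = {p \<in> loops X x0. loop_class X x0 p \<in> H}"
  have GP: "generate_topology_on (compact_open_subbasis X x0) P"
    using op unfolding qtop_open P_def loop_space_top_def openin_topology_generated_by_iff by blast
  define c where "c = (\<lambda>t::real. \<alpha> 1)"
  have a1: "\<alpha> 1 \<in> topspace X" using path_finish_in_topspace[OF a(1)] .
  have cp: "pathin X c" using a1 by (simp add: c_def)
  have L0l: "cj \<alpha> c \<alpha> \<in> loops X x0" by (rule cj_loop[OF a(1) cp a(1)]) (use a in \<open>auto simp: c_def\<close>)
  have "loop_class X x0 (cj \<alpha> c \<alpha>) = \<one>\<^bsub>fundamental_group X x0\<^esub>"
    by (rule cj_triv[OF a(1) cp a(1)]) (use a ph_runit[OF a(1)] in \<open>auto simp: c_def\<close>)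
  then have L0P: "cj \<alpha> c \<alpha> \<in> P" using L0l one by (simp add: P_def)
  then obtain F where F: "finite F" "F \<subseteq> compact_open_subbasis X x0" "cj \<alpha> c \<alpha> \<in> \<Inter>F" "\<Inter>F \<subseteq> P"
    using gen_fin[OF GP L0P] by fast
  have "\<forall>B\<in>F. \<exists>CU. B = {g \<in> loops X x0. g ` fst CU \<subseteq> snd CU} \<and> compactin (top_of_set {0..1}) (fst CU) \<and> openin X (snd CU)"
  proof
    fix B assume "B \<in> F"
    then have "B \<in> compact_open_subbasis X x0" using F(2) by blast
    then obtain C U where "B = {g \<in> loops X x0. g ` C \<subseteq> U}" "compactin (top_of_set {0..1}) C" "openin X U"
      unfolding compact_open_subbasis_def by blast
    then show "\<exists>CU. B = {g \<in> loops X x0. g ` fst CU \<subseteq> snd CU} \<and> compactin (top_of_set {0..1}) (fst CU) \<and> openin X (snd CU)"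
      by (intro exI[where x="(C,U)"]) simp
  qed
  from bchoice[OF this] obtain CU where CU0: "\<forall>B\<in>F. B = {g \<in> loops X x0. g ` fst (CU B) \<subseteq> snd (CU B)} \<and>
      compactin (top_of_set {0..1}) (fst (CU B)) \<and> openin X (snd (CU B))"
    by blast
  have CU: "\<And>B. B \<in> F \<Longrightarrow> B = {g \<in> loops X x0. g ` fst (CU B) \<subseteq> snd (CU B)} \<and>
      compactin (top_of_set {0..1}) (fst (CU B)) \<and> openin X (snd (CU B))"
    using CU0 by blast
  define I where "I = {B \<in> F. \<alpha> 1 \<in> snd (CU B)}"
  define U where "U = (\<Inter>B\<in>I. snd (CU B)) \<inter> topspace X"
  have "openin X U" unfolding U_def using F(1) CU by (intro openin_INT) (auto simp: I_def)
  moreover have "\<alpha> 1 \<in> U" using a1 by (auto simp: U_def I_def)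
  moreover have "loop_class X x0 (cj \<alpha> \<gamma> \<alpha>) \<in> H"
    if g: "pathin (subtopology X U) \<gamma>" "\<gamma> 0 = \<alpha> 1" "\<gamma> 1 = \<alpha> 1" for \<gamma>
  proof -
    have gX: "pathin X \<gamma>" and gU: "\<And>x. x \<in> {0..1} \<Longrightarrow> \<gamma> x \<in> U"
      using g(1) unfolding pathin_subtopology by auto
    have Ll: "cj \<alpha> \<gamma> \<alpha> \<in> loops X x0" by (rule cj_loop[OF a(1) gX a(1)]) (use a g in auto)
    have "cj \<alpha> \<gamma> \<alpha> \<in> B" if B: "B \<in> F" for B
    proof -
      have BB: "B = {g \<in> loops X x0. g ` fst (CU B) \<subseteq> snd (CU B)}" and Cc: "compactin (top_of_set {0..1}) (fst (CU B))"
        using CU[OF B] by auto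
      have C01: "fst (CU B) \<subseteq> {0..1}" using compactin_subset_topspace[OF Cc] by simp
      have L0B: "cj \<alpha> c \<alpha> ` fst (CU B) \<subseteq> snd (CU B)" using F(3) B BB by blast
      have "cj \<alpha> \<gamma> \<alpha> t \<in> snd (CU B)" if t: "t \<in> fst (CU B)" for t
      proof (cases "t \<le> 1/2 \<and> \<not> 2 * t \<le> 1/2")
        case True
        then have "cj \<alpha> c \<alpha> t = \<alpha> 1" by (simp add: cj_def path_join_def c_def)
        then have "\<alpha> 1 \<in> snd (CU B)" using L0B t by force
        then have "B \<in> I" using B by (simp add: I_def)
        moreover have "4 * t - 1 \<in> {0..1}" using True t C01 by auto
        ultimately have "\<gamma> (2 * (2 * t) - 1) \<in> snd (CU B)" using gU[of "4*t-1"] unfolding U_def by auto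
        then show ?thesis using True by (simp add: cj_def path_join_def)
      next
        case False
        then have "cj \<alpha> \<gamma> \<alpha> t = cj \<alpha> c \<alpha> t" by (auto simp: cj_def path_join_def)
        then show ?thesis using L0B t by force
      qed
      then show ?thesis using BB Ll by auto
    qed
    then have "cj \<alpha> \<gamma> \<alpha> \<in> P" using F(4) by blast
    then show ?thesis by (simp add: P_def)
  qed
  ultimately show ?thesis by blast
qed

lemma class_carrier: "p \<in> loops X x0 \<Longrightarrow> loop_class X x0 p \<in> carrier (fundamental_group X x0)"
  by (simp add: fg_carrier)

lemma step_alg:
  assumes x0: "x0 \<in> topspace X" and sub: "subgroup H (fundamental_group X x0)"
    and P: "pathin X as" "pathin X sA" "pathin X ak" "pathin X dA" "pathin X hk" "pathin X g'"
       "pathin X hk1" "pathin X dB" "pathin X ak1" "pathin X sB"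
    and E0: "as 0 = x0" "ak 0 = x0" "hk 0 = x0" "hk1 0 = x0" "ak1 0 = x0"
    and E1: "as 1 = sA 0" "sA 1 = ak 1" "dA 0 = ak 1" "dA 1 = hk 1" "g' 0 = hk 1" "g' 1 = hk1 1"
       "dB 1 = hk1 1" "dB 0 = ak1 1" "sB 0 = ak1 1" "sB 1 = as 1"
    and H1: "ph X (path_join as sA) ak" and H2: "ph X (path_join hk g') hk1" and H3: "ph X (path_join ak1 sB) as"
    and Ek: "loop_class X x0 (cj hk (path_reverse dA) ak) \<in> H"
    and L: "loop_class X x0 (cj as (path_join (path_join (path_join (path_join sA dA) g') (path_reverse dB)) sB) as) \<in> H"
  shows "loop_class X x0 (cj hk1 (path_reverse dB) ak1) \<in> H"
proof -
  let ?G = "fundamental_group X x0"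
  interpret G: group ?G by (rule fg_group[OF x0])
  have rd: "pathin X (path_reverse dA)" "pathin X (path_reverse dB)" using P by (auto intro: pathin_rev)
  have j1: "pathin X (path_join sA dA)" using P E1 by (intro pathin_join) auto
  have j2: "pathin X (path_join (path_join sA dA) g')" using j1 P E1 by (intro pathin_join[OF j1]) auto
  have j3: "pathin X (path_join (path_join (path_join sA dA) g') (path_reverse dB))" using j2 rd E1 by (intro pathin_join[OF j2]) auto
  define A1 where "A1 = loop_class X x0 (cj as sA ak)"
  define A2 where "A2 = loop_class X x0 (cj ak dA hk)"
  define A3 where "A3 = loop_class X x0 (cj hk g' hk1)"
  define A4 where "A4 = loop_class X x0 (cj hk1 (path_reverse dB) ak1)"
  define A5 where "A5 = loop_class X x0 (cj ak1 sB as)"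
  define E where "E = loop_class X x0 (cj hk (path_reverse dA) ak)"
  define LL where "LL = loop_class X x0 (cj as (path_join (path_join (path_join (path_join sA dA) g') (path_reverse dB)) sB) as)"
  have c1: "A1 \<in> carrier ?G" unfolding A1_def by (rule class_carrier, rule cj_loop) (use P E0 E1 in auto)
  have c2: "A2 \<in> carrier ?G" unfolding A2_def by (rule class_carrier, rule cj_loop) (use P E0 E1 in auto)
  have c3: "A3 \<in> carrier ?G" unfolding A3_def by (rule class_carrier, rule cj_loop) (use P E0 E1 in auto)
  have c4: "A4 \<in> carrier ?G" unfolding A4_def by (rule class_carrier, rule cj_loop) (use P E0 E1 rd in auto)
  have c5: "A5 \<in> carrier ?G" unfolding A5_def by (rule class_carrier, rule cj_loop) (use P E0 E1 in auto)
  have cE: "E \<in> carrier ?G" unfolding E_def by (rule class_carrier, rule cj_loop) (use P E0 E1 rd in auto)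
  have t1: "A1 = \<one>\<^bsub>?G\<^esub>" unfolding A1_def by (rule cj_triv) (use P E0 E1 H1 in auto)
  have t3: "A3 = \<one>\<^bsub>?G\<^esub>" unfolding A3_def by (rule cj_triv) (use P E0 E1 H2 in auto)
  have t5: "A5 = \<one>\<^bsub>?G\<^esub>" unfolding A5_def by (rule cj_triv) (use P E0 E1 H3 in auto)
  have m1: "A1 \<otimes>\<^bsub>?G\<^esub> A2 = loop_class X x0 (cj as (path_join sA dA) hk)"
    unfolding A1_def A2_def by (rule cj_comp) (use P E0 E1 in auto)
  have m2: "loop_class X x0 (cj as (path_join sA dA) hk) \<otimes>\<^bsub>?G\<^esub> A3 =
      loop_class X x0 (cj as (path_join (path_join sA dA) g') hk1)"
    unfolding A3_def by (rule cj_comp) (use P E0 E1 j1 in auto)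
  have m3: "loop_class X x0 (cj as (path_join (path_join sA dA) g') hk1) \<otimes>\<^bsub>?G\<^esub> A4 =
      loop_class X x0 (cj as (path_join (path_join (path_join sA dA) g') (path_reverse dB)) ak1)"
    unfolding A4_def by (rule cj_comp) (use P E0 E1 j2 rd in auto)
  have m4: "loop_class X x0 (cj as (path_join (path_join (path_join sA dA) g') (path_reverse dB)) ak1) \<otimes>\<^bsub>?G\<^esub> A5 = LL"
    unfolding A5_def LL_def by (rule cj_comp) (use P E0 E1 j3 in auto)
  have b2: "loop_class X x0 (cj as (path_join sA dA) hk) = A2" using m1 t1 c2 by simp
  have b3: "loop_class X x0 (cj as (path_join (path_join sA dA) g') hk1) = A2" using m2 b2 t3 c2 by simp
  have b4: "loop_class X x0 (cj as (path_join (path_join (path_join sA dA) g') (path_reverse dB)) ak1) = A2 \<otimes>\<^bsub>?G\<^esub> A4"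
    using m3 b3 by simp
  have "LL = A2 \<otimes>\<^bsub>?G\<^esub> A4"
    using m4 b4 t5 c2 c4 by simp
  have jd: "pathin X (path_join dA (path_reverse dA))" using P by (intro pathin_join pathin_rev) auto
  have "ph X (path_join ak (path_join dA (path_reverse dA))) (path_join ak (\<lambda>t. ak 1))"
    using ph_join_r[OF ph_rinv[OF P(4)] P(3)] E1 by simp
  moreover have "ph X (path_join ak (\<lambda>t. ak 1)) ak" by (rule ph_runit[OF P(3)])
  ultimately have hh: "ph X (path_join ak (path_join dA (path_reverse dA))) ak" using ph_trans by blast
  have "A2 \<otimes>\<^bsub>?G\<^esub> E = loop_class X x0 (cj ak (path_join dA (path_reverse dA)) ak)"
    unfolding A2_def E_def by (rule cj_comp) (use P E0 E1 rd in auto)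
  also have "\<dots> = \<one>\<^bsub>?G\<^esub>" by (rule cj_triv) (use P E0 E1 jd hh in auto)
  finally have "A2 \<otimes>\<^bsub>?G\<^esub> E = \<one>\<^bsub>?G\<^esub>" .
  then have "inv\<^bsub>?G\<^esub> E = A2" using G.inv_equality c2 cE by blast
  then have "A4 = E \<otimes>\<^bsub>?G\<^esub> LL"
    using \<open>LL = A2 \<otimes>\<^bsub>?G\<^esub> A4\<close> cE c4 by (simp flip: \<open>inv\<^bsub>?G\<^esub> E = A2\<close> add: G.m_assoc[symmetric])
  moreover have "E \<in> H" "LL \<in> H" using Ek L by (auto simp: E_def LL_def)
  ultimately show ?thesis unfolding A4_def[symmetric] using subgroup.m_closed[OF sub] by simp
qed

definition LPH :: "'a topology \<Rightarrow> 'a \<Rightarrow> ((real \<Rightarrow> 'a) set) set \<Rightarrow> (real \<Rightarrow> 'a) \<Rightarrow> 'a set \<Rightarrow> bool" where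
  "LPH X x0 H \<alpha> U \<longleftrightarrow> openin X U \<and> \<alpha> 1 \<in> U \<and> (\<forall>\<gamma>. pathin (subtopology X U) \<gamma> \<and> \<gamma> 0 = \<alpha> 1 \<and> \<gamma> 1 = \<alpha> 1 \<longrightarrow>
        loop_class X x0 (cj \<alpha> \<gamma> \<alpha>) \<in> H)"

lemma loops_open: "openin (loop_space_top X x0) (loops X x0)"
proof -
  have "openin (loop_space_top X x0) {g \<in> loops X x0. g ` {} \<subseteq> {}}"
    by (rule subbasic_open) auto
  then show ?thesis by simp
qed

lemma choose_Ur:
  assumes LP: "\<And>\<alpha>. pathin X \<alpha> \<Longrightarrow> \<alpha> 0 = x0 \<Longrightarrow> \<exists>U. LPH X x0 H \<alpha> U"
    and p: "p \<in> loops X x0" and s: "s \<in> {0..1}"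
  shows "\<exists>Ur. LPH X x0 H (psub p 0 s) (fst Ur) \<and> snd Ur > 0 \<and> (\<forall>t\<in>{0..1}. dist t s < snd Ur \<longrightarrow> p t \<in> fst Ur)"
proof -
  have pp: "pathin X p" "p 0 = x0" "p 1 = x0" using loopsD[OF p] by auto
  have ps: "pathin X (psub p 0 s)" using pathin_psub[OF pp(1)] s by auto
  obtain U where U: "LPH X x0 H (psub p 0 s) U"
    using LP[OF ps] pp(2) by auto
  then have oU: "openin X U" and sU: "p s \<in> U" by (auto simp: LPH_def)
  have "openin (top_of_set {0..1}) {t \<in> topspace (top_of_set {0..1}). p t \<in> U}"
    using openin_continuous_map_preimage[OF pp(1)[unfolded pathin_def] oU] .
  then have "openin (top_of_set {0..1}) {t \<in> {0..1::real}. p t \<in> U}" by simp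
  then obtain r where "r > 0" "\<forall>t\<in>{0..1}. dist t s < r \<longrightarrow> t \<in> {t \<in> {0..1::real}. p t \<in> U}"
    unfolding openin_euclidean_subtopology_iff using s sU by blast
  then show ?thesis using U by (intro exI[where x="(U,r)"]) auto
qed

lemma seg_in:
  fixes s z r x :: real
  assumes s: "s \<in> {0..1}" and z: "z \<in> {0..1}" and d: "dist z s < r" and x: "x \<in> {0..1}"
    and Ur: "\<forall>t\<in>{0..1}. dist t s < r \<longrightarrow> p t \<in> U"
  shows "p (s + (z - s) * x) \<in> U"
proof -
  have "s + (z - s) * x \<in> {0..1}" using convex01b[OF x s z] .
  moreover have "dist (s + (z - s) * x) s < r"
  proof -
    have "dist (s + (z - s) * x) s = \<bar>z - s\<bar> * x" using x by (simp add: dist_real_def abs_mult)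
    also have "\<dots> \<le> \<bar>z - s\<bar>" using x by (simp add: mult_left_le)
    finally show ?thesis using d by (simp add: dist_real_def)
  qed
  ultimately show ?thesis using Ur by blast
qed

lemma nbhd:
  assumes x0: "x0 \<in> topspace X" and lpc: "locally_path_connected_space X"
    and sub: "subgroup H (fundamental_group X x0)"
    and LP: "\<And>\<alpha>. pathin X \<alpha> \<Longrightarrow> \<alpha> 0 = x0 \<Longrightarrow> \<exists>U. LPH X x0 H \<alpha> U"
    and p: "p \<in> loops X x0" and pH: "loop_class X x0 p \<in> H"
  shows "\<exists>N. openin (loop_space_top X x0) N \<and> p \<in> N \<and> N \<subseteq> {q \<in> loops X x0. loop_class X x0 q \<in> H}"
proof -
  have pp: "pathin X p" "p 0 = x0" "p 1 = x0" using loopsD[OF p] by auto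
  have "\<forall>s\<in>{0..1}. \<exists>Ur. LPH X x0 H (psub p 0 s) (fst Ur) \<and> snd Ur > 0 \<and> (\<forall>t\<in>{0..1}. dist t s < snd Ur \<longrightarrow> p t \<in> fst Ur)"
    using choose_Ur[OF LP p] by blast
  from bchoice[OF this] obtain Ur where Ur0: "\<forall>s\<in>{0..1}. LPH X x0 H (psub p 0 s) (fst (Ur s)) \<and> snd (Ur s) > 0 \<and>
     (\<forall>t\<in>{0..1}. dist t s < snd (Ur s) \<longrightarrow> p t \<in> fst (Ur s))" by blast
  define U where "U s = fst (Ur s)" for s
  define r where "r s = snd (Ur s)" for s
  have UL: "LPH X x0 H (psub p 0 s) (U s)" and rpos: "r s > 0" and Ur: "\<forall>t\<in>{0..1}. dist t s < r s \<longrightarrow> p t \<in> U s"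
    if "s \<in> {0..1}" for s using Ur0 that by (auto simp: U_def r_def)
  have oU: "openin X (U s)" if "s \<in> {0..1}" for s using UL[OF that] by (simp add: LPH_def)
  obtain \<delta> where \<delta>: "0 < \<delta>" "\<And>T. T \<subseteq> {0..1} \<Longrightarrow> diameter T < \<delta> \<Longrightarrow> \<exists>B \<in> (\<lambda>s. ball s (r s)) ` {0..1::real}. T \<subseteq> B"
  proof (rule Lebesgue_number_lemma[of "{0..1::real}" "(\<lambda>s. ball s (r s)) ` {0..1}"])
    show "{0..1::real} \<subseteq> \<Union>((\<lambda>s. ball s (r s)) ` {0..1})"
      using rpos by force
  qed auto
  obtain m where m: "inverse (real (Suc m)) < \<delta>" using reals_Archimedean[OF \<delta>(1)] by blast
  define n where "n = Suc m"
  have n0: "n > 0" by (simp add: n_def)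
  have ninv: "1 / real n < \<delta>" using m by (simp add: n_def divide_inverse)
  define t where "t k = real k / real n" for k
  have t01: "t k \<in> {0..1}" if "k \<le> n" for k using that n0 by (auto simp: t_def divide_le_eq_1)
  have t0: "t 0 = 0" and tn: "t n = 1" using n0 by (auto simp: t_def)
  have tmono: "t k \<le> t (Suc k)" for k by (simp add: t_def divide_right_mono)
  have "\<exists>s\<in>{0..1}. {t k..t (Suc k)} \<subseteq> ball s (r s)" if "k < n" for k
  proof -
    have "{t k..t (Suc k)} \<subseteq> {0..1}" using t01[of k] t01[of "Suc k"] that by auto
    moreover have "diameter {t k..t (Suc k)} < \<delta>"
    proof -
      have "t (Suc k) - t k = 1 / real n" by (simp add: t_def diff_divide_distrib[symmetric])
      then show ?thesis using tmono[of k] ninv by simp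
    qed
    ultimately show ?thesis using \<delta>(2) by blast
  qed
  then obtain sk where sk: "\<And>k. k < n \<Longrightarrow> sk k \<in> {0..1} \<and> {t k..t (Suc k)} \<subseteq> ball (sk k) (r (sk k))"
    by metis
  have inU: "p y \<in> U (sk k)" if "k < n" "y \<in> {t k..t (Suc k)}" for k y
  proof -
    have "y \<in> {0..1}" using that t01[of k] t01[of "Suc k"] by auto
    moreover have "dist y (sk k) < r (sk k)" using sk[OF that(1)] that(2) by (auto simp: dist_commute)
    ultimately show ?thesis using Ur[of "sk k"] sk[OF that(1)] by blast
  qed
  define a where "a k = sk (k - 1)" for k
  define b where "b k = sk (min k (n - 1))" for k
  have ab: "p (t k) \<in> U (a k) \<and> p (t k) \<in> U (b k) \<and> a k \<in> {0..1} \<and> b k \<in> {0..1}" if "k \<le> n" for k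
  proof -
    have A: "p (t k) \<in> U (a k) \<and> a k \<in> {0..1}"
    proof (cases k)
      case 0
      then show ?thesis using inU[of 0 "t 0"] tmono[of 0] sk[of 0] n0 by (auto simp: a_def)
    next
      case (Suc j)
      then show ?thesis using inU[of j "t k"] tmono[of j] sk[of j] that by (auto simp: a_def)
    qed
    have B: "p (t k) \<in> U (b k) \<and> b k \<in> {0..1}"
    proof (cases "k < n")
      case True
      then show ?thesis using inU[of k "t k"] tmono[of k] sk[of k] by (auto simp: b_def)
    next
      case False
      then have kn: "k = n" using that by auto
      have "Suc (n - 1) = n" using n0 by simp
      then show ?thesis using inU[of "n-1" "t n"] tmono[of "n-1"] sk[of "n-1"] n0 kn by (auto simp: b_def)
    qed
    show ?thesis using A B by blast
  qed
  have "\<exists>W. openin X W \<and> path_connectedin X W \<and> p (t k) \<in> W \<and> W \<subseteq> U (a k) \<inter> U (b k)" if "k \<le> n" for k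
  proof -
    have "openin X (U (a k) \<inter> U (b k))" using oU ab[OF that] by blast
    moreover have "p (t k) \<in> U (a k) \<inter> U (b k)" using ab[OF that] by blast
    ultimately show ?thesis
      using lpc unfolding locally_path_connected_space_alt neighbourhood_base_of by blast
  qed
  then obtain W where W: "\<And>k. k \<le> n \<Longrightarrow> openin X (W k) \<and> path_connectedin X (W k) \<and> p (t k) \<in> W k \<and> W k \<subseteq> U (a k) \<inter> U (b k)"
    by metis
  define N where "N = loops X x0 \<inter> (\<Inter>k\<in>{..<n}. {g \<in> loops X x0. g ` {t k..t (Suc k)} \<subseteq> U (sk k)})
     \<inter> (\<Inter>k\<in>{..n}. {g \<in> loops X x0. g ` {t k} \<subseteq> W k})"
  have "openin (loop_space_top X x0) N"
    unfolding N_def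
  proof (intro openin_Int loops_open openin_INT2)
    show "{..<n} \<noteq> {}" "{..n} \<noteq> {}" using n0 by auto
    show "openin (loop_space_top X x0) {g \<in> loops X x0. g ` {t k..t (Suc k)} \<subseteq> U (sk k)}" if "k \<in> {..<n}" for k
    proof (rule subbasic_open)
      show "compactin (top_of_set {0..1}) {t k..t (Suc k)}"
        unfolding compactin_subtopology using t01[of k] t01[of "Suc k"] that by auto
      show "openin X (U (sk k))" using oU sk that by auto
    qed
    show "openin (loop_space_top X x0) {g \<in> loops X x0. g ` {t k} \<subseteq> W k}" if "k \<in> {..n}" for k
    proof (rule subbasic_open)
      show "compactin (top_of_set {0..1}) {t k}" using t01[of k] that by auto
      show "openin X (W k)" using W that by auto
    qed
  qed auto
  moreover have "p \<in> N"
    unfolding N_def using p inU W by auto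
  moreover have "loop_class X x0 g \<in> H" if gN: "g \<in> N" for g
  proof -
    have gl: "g \<in> loops X x0" using gN by (simp add: N_def)
    have gg: "pathin X g" "g 0 = x0" "g 1 = x0" using loopsD[OF gl] by auto
    have gU: "g y \<in> U (sk k)" if "k < n" "y \<in> {t k..t (Suc k)}" for k y
      using gN that unfolding N_def by blast
    have gW: "g (t k) \<in> W k" if "k \<le> n" for k
      using gN that unfolding N_def by blast
    have "\<exists>d. pathin X d \<and> (\<forall>x\<in>{0..1}. d x \<in> W k) \<and> d 0 = p (t k) \<and> d 1 = g (t k) \<and> ((k = 0 \<or> k = n) \<longrightarrow> d = (\<lambda>_. x0))"
      if kn: "k \<le> n" for k
    proof (cases "k = 0 \<or> k = n")
      case True
      then have "p (t k) = x0" "g (t k) = x0" using pp gg t0 tn by auto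
      moreover have "x0 \<in> W k" using W[OF kn] \<open>p (t k) = x0\<close> by auto
      ultimately show ?thesis using x0 by (intro exI[where x="\<lambda>_. x0"]) auto
    next
      case False
      have "path_connectedin X (W k)" "p (t k) \<in> W k" using W[OF kn] by auto
      then obtain d where "pathin X d" "d \<in> {0..1} \<rightarrow> W k" "d 0 = p (t k)" "d 1 = g (t k)"
        using gW[OF kn] unfolding path_connectedin by blast
      then show ?thesis using False by (intro exI[where x=d]) auto
    qed
    then obtain d where d: "\<And>k. k \<le> n \<Longrightarrow> pathin X (d k) \<and> (\<forall>x\<in>{0..1}. d k x \<in> W k) \<and> d k 0 = p (t k) \<and> d k 1 = g (t k)
        \<and> ((k = 0 \<or> k = n) \<longrightarrow> d k = (\<lambda>_. x0))"
      by metis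
    define e where "e k = cj (psub g 0 (t k)) (path_reverse (d k)) (psub p 0 (t k))" for k
    have "k \<le> n \<longrightarrow> loop_class X x0 (e k) \<in> H" for k
    proof (induction k)
      case 0
      have d0: "d 0 = (\<lambda>_. x0)" using d[of 0] by simp
      have e0: "e 0 = cj (\<lambda>_. x0) (\<lambda>_. x0) (\<lambda>_. x0)"
        using gg pp t0 by (simp add: e_def psub_const path_reverse_def d0)
      have jc: "path_join (\<lambda>_. x0) (\<lambda>_. x0) = (\<lambda>_::real. x0)" by (simp add: path_join_def)
      have "loop_class X x0 (e 0) = \<one>\<^bsub>fundamental_group X x0\<^esub>"
        unfolding e0 by (rule cj_triv) (use x0 jc in \<open>auto intro: ph_refl\<close>)
      then show ?case using subgroup.one_closed[OF sub] by simp
    next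
      case (Suc k)
      show ?case
      proof
        assume skn: "Suc k \<le> n"
        then have kn: "k < n" by simp
        have IH: "loop_class X x0 (e k) \<in> H" using Suc.IH kn by simp
        define s where "s = sk k"
        have s01: "s \<in> {0..1}" and sball: "{t k..t (Suc k)} \<subseteq> ball s (r s)" using sk[OF kn] by (auto simp: s_def)
        have tk: "t k \<in> {0..1}" "t (Suc k) \<in> {0..1}" using t01 kn skn by auto
        have z: "(0::real) \<in> {0..1}" by simp
        have dtk: "dist (t k) s < r s" "dist (t (Suc k)) s < r s"
          using sball tmono[of k] by (auto simp: dist_commute)
        have dk: "pathin X (d k)" "\<forall>x\<in>{0..1}. d k x \<in> W k" "d k 0 = p (t k)" "d k 1 = g (t k)"
          using d[of k] kn by auto
        have dk1: "pathin X (d (Suc k))" "\<forall>x\<in>{0..1}. d (Suc k) x \<in> W (Suc k)" "d (Suc k) 0 = p (t (Suc k))"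
          "d (Suc k) 1 = g (t (Suc k))"
          using d[of "Suc k"] skn by auto
        have "min k (n - 1) = k" using kn by simp
        then have WkU: "W k \<subseteq> U s" using W[of k] kn by (auto simp: b_def s_def)
        have Wk1U: "W (Suc k) \<subseteq> U s" using W[of "Suc k"] skn by (auto simp: a_def s_def)
        let ?S = "subtopology X (U s)"
        have P1: "pathin ?S (psub p s (t k))"
          unfolding pathin_subtopology psub_def
          using pathin_psub[OF pp(1) s01 tk(1)] seg_in[OF s01 tk(1) dtk(1) _ Ur[OF s01]]
          by (auto simp: psub_def)
        have P5': "pathin ?S (psub p s (t (Suc k)))"
          unfolding pathin_subtopology psub_def
          using pathin_psub[OF pp(1) s01 tk(2)] seg_in[OF s01 tk(2) dtk(2) _ Ur[OF s01]]
          by (auto simp: psub_def)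
        have P5: "pathin ?S (psub p (t (Suc k)) s)"
          using pathin_rev[OF P5'] by (simp add: psub_rev)
        have P2: "pathin ?S (d k)" unfolding pathin_subtopology using dk WkU by auto
        have P4: "pathin ?S (path_reverse (d (Suc k)))"
          by (rule pathin_rev) (unfold pathin_subtopology, use dk1 Wk1U in auto)
        have P3: "pathin ?S (psub g (t k) (t (Suc k)))"
          unfolding pathin_subtopology
        proof
          show "pathin X (psub g (t k) (t (Suc k)))" using pathin_psub[OF gg(1) tk] .
          show "\<forall>x\<in>{0..1}. psub g (t k) (t (Suc k)) x \<in> U s"
          proof
            fix x :: real assume x: "x \<in> {0..1}"
            have "t k + (t (Suc k) - t k) * x \<in> {t k..t (Suc k)}"
            proof -
              have "(t (Suc k) - t k) * x \<le> (t (Suc k) - t k)" using x tmono[of k] by (simp add: mult_left_le)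
              then show ?thesis using x tmono[of k] by simp
            qed
            then show "psub g (t k) (t (Suc k)) x \<in> U s"
              using gU[OF kn] by (simp add: psub_def s_def)
          qed
        qed
        define lp where "lp = path_join (path_join (path_join (path_join (psub p s (t k)) (d k))
             (psub g (t k) (t (Suc k)))) (path_reverse (d (Suc k)))) (psub p (t (Suc k)) s)"
        have Pl: "pathin ?S lp" unfolding lp_def
          using P1 P2 P3 P4 P5 dk dk1 by (intro pathin_join) auto
        have "LPH X x0 H (psub p 0 s) (U s)" using UL[OF s01] .
        then have L: "loop_class X x0 (cj (psub p 0 s) lp (psub p 0 s)) \<in> H"
          unfolding LPH_def using Pl by (auto simp: lp_def)
        show "loop_class X x0 (e (Suc k)) \<in> H"
          unfolding e_def
        proof (rule step_alg[OF x0 sub, where as="psub p 0 s" and sA="psub p s (t k)" and ak="psub p 0 (t k)"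
              and dA="d k" and hk="psub g 0 (t k)" and g'="psub g (t k) (t (Suc k))"])
          show "ph X (path_join (psub p 0 s) (psub p s (t k))) (psub p 0 (t k))"
            by (rule ph_psub[OF pp(1)]) (use s01 tk in auto)
          show "ph X (path_join (psub g 0 (t k)) (psub g (t k) (t (Suc k)))) (psub g 0 (t (Suc k)))"
            by (rule ph_psub[OF gg(1)]) (use tk in auto)
          show "ph X (path_join (psub p 0 (t (Suc k))) (psub p (t (Suc k)) s)) (psub p 0 s)"
            by (rule ph_psub[OF pp(1)]) (use s01 tk in auto)
          show "loop_class X x0 (cj (psub g 0 (t k)) (path_reverse (d k)) (psub p 0 (t k))) \<in> H"
            using IH by (simp add: e_def)
          show "loop_class X x0 (cj (psub p 0 s) (path_join (path_join (path_join (path_join (psub p s (t k)) (d k))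
             (psub g (t k) (t (Suc k)))) (path_reverse (d (Suc k)))) (psub p (t (Suc k)) s)) (psub p 0 s)) \<in> H"
            using L by (simp add: lp_def)
        qed (use pp gg s01 tk dk dk1 pathin_psub[OF pp(1) z s01] pathin_psub[OF pp(1) s01 tk(1)]
            pathin_psub[OF pp(1) z tk(1)] pathin_psub[OF gg(1) z tk(1)] pathin_psub[OF gg(1) tk]
            pathin_psub[OF gg(1) z tk(2)] pathin_psub[OF pp(1) z tk(2)] pathin_psub[OF pp(1) tk(2) s01] in auto)
      qed
    qed
    then have en: "loop_class X x0 (e n) \<in> H" by blast
    have dn: "d n = (\<lambda>_. x0)" using d[of n] by simp
    let ?c = "\<lambda>_::real. x0"
    have cX: "pathin X ?c" using x0 by simp
    have en': "e n = cj g ?c p" using tn by (simp add: e_def psub_01 dn path_reverse_def)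
    have jc: "path_join ?c ?c = ?c" by (simp add: path_join_def)
    have "loop_class X x0 (cj g ?c p) \<otimes>\<^bsub>fundamental_group X x0\<^esub> loop_class X x0 (cj p ?c ?c)
        = loop_class X x0 (cj g (path_join ?c ?c) ?c)"
      by (rule cj_comp) (use gg pp cX in auto)
    then have "loop_class X x0 (e n) \<otimes>\<^bsub>fundamental_group X x0\<^esub> loop_class X x0 p = loop_class X x0 g"
      using cj_const[OF p] cj_const[OF gl] en' jc by simp
    then show ?thesis using subgroup.m_closed[OF sub en pH] by simp
  qed
  then have "N \<subseteq> {q \<in> loops X x0. loop_class X x0 q \<in> H}"
    by (auto simp: N_def)
  ultimately show ?thesis by blast
qed

lemma hard_dir:
  assumes x0: "x0 \<in> topspace X" and lpc: "locally_path_connected_space X"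
    and sub: "subgroup H (fundamental_group X x0)"
    and LP: "\<And>\<alpha>. pathin X \<alpha> \<Longrightarrow> \<alpha> 0 = x0 \<Longrightarrow> \<exists>U. LPH X x0 H \<alpha> U"
  shows "openin (pi1_qtop X x0) H"
  unfolding qtop_open
proof
  show "H \<subseteq> carrier (fundamental_group X x0)" using subgroup.subset[OF sub] .
  show "openin (loop_space_top X x0) {p \<in> loops X x0. loop_class X x0 p \<in> H}"
    unfolding openin_subopen[of _ "{p \<in> loops X x0. loop_class X x0 p \<in> H}"]
    using nbhd[OF x0 lpc sub LP] by blast
qed

lemma rcos_G: "H #>\<^bsub>G\<lparr>carrier := K\<rparr>\<^esub> a = H #>\<^bsub>G\<^esub> a"
  by (simp add: r_coset_def)

theorem proposition2p13:
  fixes X :: "'a topology" and x0 :: 'a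
    and H K :: "((real \<Rightarrow> 'a) set) set"
  assumes "connected_space X"
    and "locally_path_connected_space X"
    and "x0 \<in> topspace X"
    and "subgroup K (fundamental_group X x0)"
    and "openin (pi1_qtop X x0) K"
    and "subgroup H (fundamental_group X x0)"
    and "H \<subseteq> K"
    and "finite (rcosets\<^bsub>(fundamental_group X x0)\<lparr>carrier := K\<rparr>\<^esub> H)"
  shows "openin (pi1_qtop X x0) H \<longleftrightarrow> homotopically_hausdorff_rel X x0 H"
proof -
  let ?G = "fundamental_group X x0"
  note x0 = assms(3) and subK = assms(4) and Kopen = assms(5) and subH = assms(6) and HK = assms(7)
    and fin = assms(8)
  interpret G: group ?G by (rule fg_group[OF x0])
  have Hc: "H \<subseteq> carrier ?G" using subgroup.subset[OF subH] .
  have Kc: "K \<subseteq> carrier ?G" using subgroup.subset[OF subK] .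
  show ?thesis
  proof
    assume Hopen: "openin (pi1_qtop X x0) H"
    show "homotopically_hausdorff_rel X x0 H"
      unfolding homotopically_hausdorff_rel_def
    proof (intro ballI allI impI)
      fix g \<alpha> assume g: "g \<in> carrier ?G - H" and a: "pathin X \<alpha> \<and> \<alpha> 0 = x0"
      obtain U where U: "openin X U" "\<alpha> 1 \<in> U"
        "\<And>\<gamma>. pathin (subtopology X U) \<gamma> \<and> \<gamma> 0 = \<alpha> 1 \<and> \<gamma> 1 = \<alpha> 1 \<Longrightarrow> loop_class X x0 (cj \<alpha> \<gamma> \<alpha>) \<in> H"
        using LP_of_open[OF x0 Hopen subgroup.one_closed[OF subH]] a by blast
      have "\<not> (\<exists>\<gamma>. pathin (subtopology X U) \<gamma> \<and> \<gamma> 0 = \<alpha> 1 \<and> \<gamma> 1 = \<alpha> 1 \<and>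
                 loop_class X x0 (path_join (path_join \<alpha> \<gamma>) (path_reverse \<alpha>)) \<in> H #>\<^bsub>?G\<^esub> g)"
      proof
        assume "\<exists>\<gamma>. pathin (subtopology X U) \<gamma> \<and> \<gamma> 0 = \<alpha> 1 \<and> \<gamma> 1 = \<alpha> 1 \<and>
                 loop_class X x0 (path_join (path_join \<alpha> \<gamma>) (path_reverse \<alpha>)) \<in> H #>\<^bsub>?G\<^esub> g"
        then obtain \<gamma> where \<gamma>: "pathin (subtopology X U) \<gamma>" "\<gamma> 0 = \<alpha> 1" "\<gamma> 1 = \<alpha> 1"
          and inc: "loop_class X x0 (cj \<alpha> \<gamma> \<alpha>) \<in> H #>\<^bsub>?G\<^esub> g" by (auto simp: cj_def)
        have cH: "loop_class X x0 (cj \<alpha> \<gamma> \<alpha>) \<in> H" using U(3) \<gamma> by blast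
        have gc: "g \<in> carrier ?G" using g by blast
        have "H #>\<^bsub>?G\<^esub> g = H #>\<^bsub>?G\<^esub> loop_class X x0 (cj \<alpha> \<gamma> \<alpha>)"
          by (rule G.repr_independence[OF inc gc subH])
        also have "\<dots> = H" by (rule G.coset_join2) (use cH Hc subH in auto)
        finally have "g \<in> H" using G.rcos_self[OF gc subH] by simp
        then show False using g by blast
      qed
      then show "\<exists>U. openin X U \<and> \<alpha> 1 \<in> U \<and>
           \<not> (\<exists>\<gamma>. pathin (subtopology X U) \<gamma> \<and> \<gamma> 0 = \<alpha> 1 \<and> \<gamma> 1 = \<alpha> 1 \<and>
                 loop_class X x0 (path_join (path_join \<alpha> \<gamma>) (path_reverse \<alpha>)) \<in> H #>\<^bsub>?G\<^esub> g)"
        using U(1,2) by blast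
    qed
  next
    assume HH: "homotopically_hausdorff_rel X x0 H"
    show "openin (pi1_qtop X x0) H"
    proof (rule hard_dir[OF x0 assms(2) subH])
      fix \<alpha> assume a: "pathin X \<alpha>" "\<alpha> 0 = x0"
      obtain U0 where U0: "openin X U0" "\<alpha> 1 \<in> U0"
        "\<And>\<gamma>. pathin (subtopology X U0) \<gamma> \<and> \<gamma> 0 = \<alpha> 1 \<and> \<gamma> 1 = \<alpha> 1 \<Longrightarrow> loop_class X x0 (cj \<alpha> \<gamma> \<alpha>) \<in> K"
        using LP_of_open[OF x0 Kopen subgroup.one_closed[OF subK]] a by blast
      define F where "F = {C \<in> rcosets\<^bsub>?G\<lparr>carrier := K\<rparr>\<^esub> H. C \<noteq> H}"
      have finF: "finite F" using fin by (simp add: F_def)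
      have "\<exists>V. openin X V \<and> \<alpha> 1 \<in> V \<and> \<not> (\<exists>\<gamma>. pathin (subtopology X V) \<gamma> \<and> \<gamma> 0 = \<alpha> 1 \<and> \<gamma> 1 = \<alpha> 1 \<and>
                 loop_class X x0 (cj \<alpha> \<gamma> \<alpha>) \<in> C)" if C: "C \<in> F" for C
      proof -
        obtain k where k: "k \<in> K" "C = H #>\<^bsub>?G\<^esub> k"
          using C unfolding F_def RCOSETS_def by (auto simp: rcos_G)
        have kc: "k \<in> carrier ?G" using k Kc by blast
        have "k \<notin> H"
        proof
          assume "k \<in> H"
          then have "H #>\<^bsub>?G\<^esub> k = H" using G.coset_join2[OF kc subH] by blast
          then show False using C k by (simp add: F_def)
        qed
        then have "k \<in> carrier ?G - H" using kc by blast
        then show ?thesis using HH a k unfolding homotopically_hausdorff_rel_def cj_def by blast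
      qed
      then obtain V where V: "\<And>C. C \<in> F \<Longrightarrow> openin X (V C) \<and> \<alpha> 1 \<in> V C \<and>
          \<not> (\<exists>\<gamma>. pathin (subtopology X (V C)) \<gamma> \<and> \<gamma> 0 = \<alpha> 1 \<and> \<gamma> 1 = \<alpha> 1 \<and> loop_class X x0 (cj \<alpha> \<gamma> \<alpha>) \<in> C)"
        by metis
      define U where "U = U0 \<inter> ((\<Inter>C\<in>F. V C) \<inter> topspace X)"
      have "openin X U" unfolding U_def using U0(1) finF V by (intro openin_Int openin_INT) auto
      moreover have "\<alpha> 1 \<in> U" unfolding U_def using U0(2) V path_finish_in_topspace[OF a(1)] by auto
      moreover have "loop_class X x0 (cj \<alpha> \<gamma> \<alpha>) \<in> H"
        if \<gamma>: "pathin (subtopology X U) \<gamma>" "\<gamma> 0 = \<alpha> 1" "\<gamma> 1 = \<alpha> 1" for \<gamma>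
      proof (rule ccontr)
        assume nH: "loop_class X x0 (cj \<alpha> \<gamma> \<alpha>) \<notin> H"
        let ?c = "loop_class X x0 (cj \<alpha> \<gamma> \<alpha>)"
        have gX: "pathin X \<gamma>" and gU: "\<forall>x\<in>{0..1}. \<gamma> x \<in> U" using \<gamma>(1) unfolding pathin_subtopology by auto
        have "pathin (subtopology X U0) \<gamma>" using gX gU unfolding pathin_subtopology U_def by auto
        then have cK: "?c \<in> K" using U0(3) \<gamma> by blast
        have cc: "?c \<in> carrier ?G" using cK Kc by blast
        have "H #>\<^bsub>?G\<^esub> ?c \<in> rcosets\<^bsub>?G\<lparr>carrier := K\<rparr>\<^esub> H"
          unfolding RCOSETS_def using cK by (auto simp: rcos_G)
        moreover have "H #>\<^bsub>?G\<^esub> ?c \<noteq> H" using G.rcos_self[OF cc subH] nH by auto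
        ultimately have CF: "H #>\<^bsub>?G\<^esub> ?c \<in> F" by (simp add: F_def)
        have "pathin (subtopology X (V (H #>\<^bsub>?G\<^esub> ?c))) \<gamma>"
          using gX gU CF unfolding pathin_subtopology U_def by auto
        then show False using V[OF CF] \<gamma> G.rcos_self[OF cc subH] by blast
      qed
      ultimately show "\<exists>U. LPH X x0 H \<alpha> U" unfolding LPH_def by blast
    qed
  qed
qed

end
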